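(* Let $W:\mathbb{N}^\star\times\mathbb{N}^\star\to\mathbb{C}$ be such that $F\,\square_W\,G\in\mathbb{M}$ and $F\,\square_W\,G=G\,\square_W\,F$ for all $F,G\in\mathbb{M}$. Then $(F\,\square_W\,G)\,\square_W\,H=F\,\square_W\,(G\,\square_W\,H)$ for all $F,G,H\in\mathbb{M}$ if and only if $W(a,b)W(ab,c)=W(b,c)W(bc,a)$ for all $a,b,c\in\mathbb{N}^\star$.
   Context: $\mathbb{M}$ is the set of functions $F:\mathbb{N}^\star\to\mathbb{C}$ with $F(1)=1$ and $F(ab)=F(a)F(b)$ whenever $\gcd(a,b)=1$. For a weight $W$, $(F\,\square_W\,G)(m)=\sum_{ab=m}F(a)G(b)W(a,b)$. *)

theory Defs
  imports Complex_Main
begin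

text \<open>Functions on the positive integers are represented as functions on nat;
  values at 0 are ignored throughout.\<close>

definition multM :: "(nat \<Rightarrow> complex) set" where
  "multM = {F. F 1 = 1 \<and> (\<forall>a b. 0 < a \<longrightarrow> 0 < b \<longrightarrow> coprime a b \<longrightarrow> F (a * b) = F a * F b)}"

definition wconv :: "(nat \<Rightarrow> nat \<Rightarrow> complex) \<Rightarrow> (nat \<Rightarrow> complex) \<Rightarrow> (nat \<Rightarrow> complex) \<Rightarrow> nat \<Rightarrow> complex" where
  "wconv W F G m = (\<Sum>a\<in>{a. a dvd m}. F a * G (m div a) * W a (m div a))"

definition eqpos :: "(nat \<Rightarrow> complex) \<Rightarrow> (nat \<Rightarrow> complex) \<Rightarrow> bool" where
  "eqpos F G \<longleftrightarrow> (\<forall>m>0. F m = G m)"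

end

theory Submission
  imports Defs
begin

definition T3 :: "nat \<Rightarrow> (nat \<times> nat \<times> nat) set" where
  "T3 m = {(a,b,c). a * b * c = m}"

lemma fin_dvd: "0 < (m::nat) \<Longrightarrow> finite {a. a dvd m}"
  by (simp add: finite_divisors_nat)

lemma fin_T3: assumes "0 < m" shows "finite (T3 m)"
proof -
  have "T3 m \<subseteq> {..m} \<times> {..m} \<times> {..m}"
    using assms by (auto simp: T3_def)
  then show ?thesis by (rule finite_subset) auto
qed

lemma sum_single:
  assumes "finite A" "x \<in> A" "\<And>y. y \<in> A \<Longrightarrow> y \<noteq> x \<Longrightarrow> f y = 0"
  shows "sum f A = f x"
  using assms by (simp add: sum.remove sum.neutral)

lemma expand_left:
  assumes "0 < m"
  shows "wconv W (wconv W F G) H m =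
     (\<Sum>(a,b,c)\<in>T3 m. F a * G b * H c * (W a b * W (a*b) c))"
proof -
  have "wconv W (wconv W F G) H m =
     (\<Sum>d\<in>{d. d dvd m}. \<Sum>a\<in>{a. a dvd d}. F a * G (d div a) * W a (d div a) * H (m div d) * W d (m div d))"
    unfolding wconv_def by (simp add: sum_distrib_right)
  also have "\<dots> = (\<Sum>(d,a)\<in>(SIGMA d:{d. d dvd m}. {a. a dvd d}).
       F a * G (d div a) * W a (d div a) * H (m div d) * W d (m div d))"
    using assms by (intro sum.Sigma) (auto intro: fin_dvd dvd_pos_nat)
  also have "\<dots> = (\<Sum>(a,b,c)\<in>T3 m. F a * G b * H c * (W a b * W (a*b) c))"
  proof (rule sum.reindex_bij_witness[where j="\<lambda>(d,a). (a, d div a, m div d)"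
        and i="\<lambda>(a,b,c). (a*b, a)"])
    fix x assume "x \<in> (SIGMA d:{d. d dvd m}. {a. a dvd d})"
    then show "(\<lambda>(a,b,c). (a*b, a)) ((\<lambda>(d,a). (a, d div a, m div d)) x) = x"
      and "(\<lambda>(d,a). (a, d div a, m div d)) x \<in> T3 m"
      using assms by (auto simp: T3_def)
  next
    fix y assume "y \<in> T3 m"
    then show "(\<lambda>(d,a). (a, d div a, m div d)) ((\<lambda>(a,b,c). (a*b, a)) y) = y"
      and "(\<lambda>(a,b,c). (a*b, a)) y \<in> (SIGMA d:{d. d dvd m}. {a. a dvd d})"
      using assms by (auto simp: T3_def)
  next
    fix x assume "x \<in> (SIGMA d:{d. d dvd m}. {a. a dvd d})"
    then show "(\<lambda>(a,b,c). F a * G b * H c * (W a b * W (a*b) c)) ((\<lambda>(d,a). (a, d div a, m div d)) x)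
       = (\<lambda>(d,a). F a * G (d div a) * W a (d div a) * H (m div d) * W d (m div d)) x"
      by auto
  qed
  finally show ?thesis .
qed

lemma expand_right:
  assumes "0 < m"
  shows "wconv W F (wconv W G H) m =
     (\<Sum>(a,b,c)\<in>T3 m. F a * G b * H c * (W b c * W a (b*c)))"
proof -
  have "wconv W F (wconv W G H) m =
     (\<Sum>a\<in>{a. a dvd m}. \<Sum>b\<in>{b. b dvd m div a}. F a * G b * H (m div a div b) * W b (m div a div b) * W a (m div a))"
    unfolding wconv_def by (simp add: sum_distrib_left sum_distrib_right mult_ac)
  also have "\<dots> = (\<Sum>(a,b)\<in>(SIGMA a:{a. a dvd m}. {b. b dvd m div a}).
       F a * G b * H (m div a div b) * W b (m div a div b) * W a (m div a))"
    using assms by (intro sum.Sigma) (auto intro!: fin_dvd simp: dvd_div_eq_0_iff)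
  also have "\<dots> = (\<Sum>(a,b,c)\<in>T3 m. F a * G b * H c * (W b c * W a (b*c)))"
  proof (rule sum.reindex_bij_witness[where j="\<lambda>(a,b). (a, b, m div a div b)"
        and i="\<lambda>(a,b,c). (a, b)"])
    fix x assume "x \<in> (SIGMA a:{a. a dvd m}. {b. b dvd m div a})"
    then show "(\<lambda>(a,b,c). (a, b)) ((\<lambda>(a,b). (a, b, m div a div b)) x) = x"
      and "(\<lambda>(a,b). (a, b, m div a div b)) x \<in> T3 m"
      using assms by (auto simp: T3_def)
  next
    fix y assume "y \<in> T3 m"
    then show "(\<lambda>(a,b). (a, b, m div a div b)) ((\<lambda>(a,b,c). (a, b)) y) = y"
      and "(\<lambda>(a,b,c). (a, b)) y \<in> (SIGMA a:{a. a dvd m}. {b. b dvd m div a})"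
      using assms by (auto simp: T3_def)
  next
    fix x assume "x \<in> (SIGMA a:{a. a dvd m}. {b. b dvd m div a})"
    then show "(\<lambda>(a,b,c). F a * G b * H c * (W b c * W a (b*c))) ((\<lambda>(a,b). (a, b, m div a div b)) x)
       = (\<lambda>(a,b). F a * G b * H (m div a div b) * W b (m div a div b) * W a (m div a)) x"
      using assms by (auto simp: mult_ac)
  qed
  finally show ?thesis .
qed

definition ind :: "nat \<Rightarrow> nat \<Rightarrow> complex" where
  "ind a n = (if n dvd a then 1 else 0)"

lemma ind_mult: "ind a \<in> multM"
  unfolding multM_def ind_def
  by (auto simp: divides_mult dest: dvd_mult_left dvd_mult_right)

lemma conv_ind:
  assumes "0 < a" "0 < b"
  shows "wconv W (ind a) (ind b) (a*b) = W a b"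
proof -
  have "wconv W (ind a) (ind b) (a*b) =
     (\<lambda>d. ind a d * ind b (a*b div d) * W d (a*b div d)) a"
  proof (unfold wconv_def, rule sum_single)
    show "finite {d. d dvd a * b}" using assms by (simp add: fin_dvd)
  next
    fix d assume d: "d \<in> {d. d dvd a * b}" "d \<noteq> a"
    show "ind a d * ind b (a * b div d) * W d (a * b div d) = 0"
    proof (cases "d dvd a \<and> (a*b div d) dvd b")
      case True
      then obtain k l where k: "a = d * k" and l: "b = (a*b div d) * l" by blast
      have "d > 0" using assms k by auto
      then have "a * b div d = k * b" using k by simp
      then have "b = k * b * l" using l by simp
      then have "b * (k*l) = b * 1" by (simp add: mult_ac)
      then have "k*l = 1" using assms(2) by (simp only: mult_left_cancel)
      then have "k = 1" by simp
      then show ?thesis using k d by simp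
    qed (auto simp: ind_def)
  qed auto
  also have "\<dots> = W a b" using assms by (simp add: ind_def)
  finally show ?thesis .
qed

lemma W_sym:
  assumes comm: "\<forall>F\<in>multM. \<forall>G\<in>multM. eqpos (wconv W F G) (wconv W G F)"
    and "0 < a" "0 < b"
  shows "W a b = W b a"
proof -
  have "wconv W (ind a) (ind b) (a*b) = wconv W (ind b) (ind a) (a*b)"
    using comm ind_mult assms unfolding eqpos_def by auto
  then show ?thesis using conv_ind[of a b W] conv_ind[of b a W] assms by (simp add: mult.commute)
qed

lemma triple_eq:
  fixes a b c a' b' c' :: nat
  assumes "0<a" "0<b" "0<c" "a' dvd a" "b' dvd b" "c' dvd c" "a'*b'*c' = a*b*c"
  shows "a' = a \<and> b' = b \<and> c' = c"
proof -
  obtain k l n where ka: "a = a'*k" and lb: "b = b'*l" and nc: "c = c'*n" using assms by blast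
  have "a'*b'*c' * (k*l*n) = a*b*c" unfolding ka lb nc by (simp add: ac_simps)
  then have "a'*b'*c' * (k*l*n) = a'*b'*c' * 1" using assms(7) by simp
  moreover have "a'*b'*c' \<noteq> 0" using assms by auto
  ultimately have "k*l*n = 1" by (metis mult_left_cancel)
  then show ?thesis using ka lb nc by simp
qed

theorem mainTheorem7:
  fixes W :: "nat \<Rightarrow> nat \<Rightarrow> complex"
  assumes closed: "\<forall>F\<in>multM. \<forall>G\<in>multM. wconv W F G \<in> multM"
    and comm: "\<forall>F\<in>multM. \<forall>G\<in>multM. eqpos (wconv W F G) (wconv W G F)"
  shows "(\<forall>F\<in>multM. \<forall>G\<in>multM. \<forall>H\<in>multM.
            eqpos (wconv W (wconv W F G) H) (wconv W F (wconv W G H)))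
         \<longleftrightarrow> (\<forall>a>0. \<forall>b>0. \<forall>c>0. W a b * W (a * b) c = W b c * W (b * c) a)"
proof
  assume A: "\<forall>F\<in>multM. \<forall>G\<in>multM. \<forall>H\<in>multM.
            eqpos (wconv W (wconv W F G) H) (wconv W F (wconv W G H))"
  show "\<forall>a>0. \<forall>b>0. \<forall>c>0. W a b * W (a * b) c = W b c * W (b * c) a"
  proof (intro allI impI)
    fix a b c :: nat assume p: "0 < a" "0 < b" "0 < c"
    let ?m = "a*b*c"
    have m: "0 < ?m" using p by simp
    have in3: "(a,b,c) \<in> T3 ?m" by (simp add: T3_def)
    have z: "ind a x * ind b y * ind c z = 0" if "(x,y,z) \<in> T3 ?m" "(x,y,z) \<noteq> (a,b,c)" for x y z
      using that triple_eq[OF p, of x y z] by (auto simp: ind_def T3_def)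
    have "wconv W (wconv W (ind a) (ind b)) (ind c) ?m = wconv W (ind a) (wconv W (ind b) (ind c)) ?m"
      using A ind_mult m unfolding eqpos_def by blast
    moreover have "wconv W (wconv W (ind a) (ind b)) (ind c) ?m = W a b * W (a*b) c"
      unfolding expand_left[OF m]
      by (subst sum_single[OF fin_T3[OF m] in3]) (auto simp: ind_def dest: z)
    moreover have "wconv W (ind a) (wconv W (ind b) (ind c)) ?m = W b c * W a (b*c)"
      unfolding expand_right[OF m]
      by (subst sum_single[OF fin_T3[OF m] in3]) (auto simp: ind_def dest: z)
    ultimately show "W a b * W (a * b) c = W b c * W (b * c) a"
      using W_sym[OF comm, of a "b*c"] p by simp
  qed
next
  assume C: "\<forall>a>0. \<forall>b>0. \<forall>c>0. W a b * W (a * b) c = W b c * W (b * c) a"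
  show "\<forall>F\<in>multM. \<forall>G\<in>multM. \<forall>H\<in>multM.
            eqpos (wconv W (wconv W F G) H) (wconv W F (wconv W G H))"
    unfolding eqpos_def
  proof (intro ballI allI impI)
    fix F G H and m :: nat assume m: "0 < m"
    show "wconv W (wconv W F G) H m = wconv W F (wconv W G H) m"
      unfolding expand_left[OF m] expand_right[OF m]
    proof (rule sum.cong[OF refl], clarify)
      fix a b c assume "(a,b,c) \<in> T3 m"
      then have p: "0<a" "0<b" "0<c" using m by (auto simp: T3_def)
      then show "F a * G b * H c * (W a b * W (a * b) c) = F a * G b * H c * (W b c * W a (b * c))"
        using C p W_sym[OF comm, of a "b*c"] by auto
    qed
  qed
qed

end
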